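(* Let $H_0$ and $H_1^1,\dots,H_1^\Gamma$ be Hermitian operators on a finite-dimensional Hilbert space, let $\alpha\in\mathbb{R}$, let $H_1=\sum_{\gamma=1}^\Gamma H_1^\gamma$ and $H=H_0+\alpha H_1$. For $t\ge 0$ define $$U_{\rm apx}(t):=e^{-itH_0}\prod_{\gamma=1}^{\Gamma}\left(e^{itH_0}e^{-it(H_0+\alpha H_1^\gamma)}\right),$$ where the product is ordered with the factor $\gamma=1$ leftmost. Then $U_{\rm apx}(t)$ approximates $U(t)=e^{-itH}$ with error $$\|U(t)-U_{\rm apx}(t)\|\leq \alpha^2\int_{0}^{t}dv\int_{0}^{v}ds\sum_{1\le\gamma_1<\gamma_2\le\Gamma}\|[H_{1}^{\gamma_1}(s),H_{1}^{\gamma_2}(v)]\|,$$ where $H_1^\gamma(s):=e^{isH_0}H_1^\gamma e^{-isH_0}$. In particular, for sufficiently small time $t$ this error is $O(\alpha^2t^2)$.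
   Context: $\|\cdot\|$ denotes the operator (spectral) norm. *)

theory Defs
  imports "HOL-Analysis.Analysis"
begin

type_synonym 'n cmat = "complex ^ 'n ^ 'n"

definition mpow :: "'n::finite cmat \<Rightarrow> nat \<Rightarrow> 'n cmat" where
  "mpow A k = (((**) A) ^^ k) (mat 1)"

definition mexp :: "'n::finite cmat \<Rightarrow> 'n cmat" where
  "mexp A = (\<Sum>k. (1 / fact k) *\<^sub>R mpow A k)"

definition cscale :: "complex \<Rightarrow> 'n::finite cmat \<Rightarrow> 'n cmat" where
  "cscale c A = (\<chi> i j. c * A $ i $ j)"

definition adj :: "'n::finite cmat \<Rightarrow> 'n cmat" where
  "adj A = (\<chi> i j. cnj (A $ j $ i))"

definition hermitian :: "'n::finite cmat \<Rightarrow> bool" where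
  "hermitian A \<longleftrightarrow> adj A = A"

text \<open>Operator (spectral) norm: norm on complex^'n is the Euclidean (l2) norm.\<close>
definition opnorm :: "'n::finite cmat \<Rightarrow> real" where
  "opnorm A = onorm (\<lambda>v. A *v v)"

definition commutator :: "'n::finite cmat \<Rightarrow> 'n cmat \<Rightarrow> 'n cmat" where
  "commutator A B = A ** B - B ** A"

definition oprod :: "'n::finite cmat list \<Rightarrow> 'n cmat" where
  "oprod As = foldr (**) As (mat 1)"

definition interaction :: "'n::finite cmat \<Rightarrow> 'n cmat \<Rightarrow> real \<Rightarrow> 'n cmat" where
  "interaction H0 H s = mexp (cscale (\<i> * s) H0) ** H ** mexp (cscale (- \<i> * s) H0)"

definition U_exact :: "'n::finite cmat \<Rightarrow> (nat \<Rightarrow> 'n cmat) \<Rightarrow> nat \<Rightarrow> real \<Rightarrow> real \<Rightarrow> 'n cmat" where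
  "U_exact H0 H1 \<Gamma> \<alpha> t =
     mexp (cscale (- \<i> * t) (H0 + cscale (of_real \<alpha>) (\<Sum>\<gamma>\<in>{1..\<Gamma>}. H1 \<gamma>)))"

definition U_apx :: "'n::finite cmat \<Rightarrow> (nat \<Rightarrow> 'n cmat) \<Rightarrow> nat \<Rightarrow> real \<Rightarrow> real \<Rightarrow> 'n cmat" where
  "U_apx H0 H1 \<Gamma> \<alpha> t =
     mexp (cscale (- \<i> * t) H0) **
     oprod (map (\<lambda>\<gamma>. mexp (cscale (\<i> * t) H0) **
                       mexp (cscale (- \<i> * t) (H0 + cscale (of_real \<alpha>) (H1 \<gamma>))))
                [1..<\<Gamma>+1])"

end

theory Submission imports Defs begin


typedef ('n::finite) M = "UNIV :: 'n cmat set" morphisms rep abs by auto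
setup_lifting type_definition_M

lemma opnorm_bl: "bounded_linear (\<lambda>v. (A::'n::finite cmat) *v v)"
  by simp

lemma scaleR_mv: "(r *\<^sub>R (A::'n::finite cmat)) *v v = r *\<^sub>R (A *v v)"
  by (simp add: matrix_vector_mult_def vec_eq_iff scaleR_sum_right)

instantiation M :: (finite) real_normed_algebra_1
begin
lift_definition zero_M :: "'a M" is 0 .
lift_definition one_M :: "'a M" is "mat 1" .
lift_definition plus_M :: "'a M \<Rightarrow> 'a M \<Rightarrow> 'a M" is "(+)" .
lift_definition minus_M :: "'a M \<Rightarrow> 'a M \<Rightarrow> 'a M" is "(-)" .
lift_definition uminus_M :: "'a M \<Rightarrow> 'a M" is uminus .
lift_definition times_M :: "'a M \<Rightarrow> 'a M \<Rightarrow> 'a M" is "(**)" .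
lift_definition scaleR_M :: "real \<Rightarrow> 'a M \<Rightarrow> 'a M" is scaleR .
lift_definition norm_M :: "'a M \<Rightarrow> real" is opnorm .
definition sgn_M :: "'a M \<Rightarrow> 'a M" where "sgn_M x = inverse (norm x) *\<^sub>R x"
definition dist_M :: "'a M \<Rightarrow> 'a M \<Rightarrow> real" where "dist_M x y = norm (x - y)"
definition uniformity_M :: "('a M \<times> 'a M) filter" where
  "uniformity_M = (INF e\<in>{0<..}. principal {(x, y). dist x y < e})"
definition open_M :: "'a M set \<Rightarrow> bool" where
  "open_M U = (\<forall>x\<in>U. \<forall>\<^sub>F (x', y) in uniformity. x' = x \<longrightarrow> y \<in> U)"
instance
proof
  fix a b c :: "'a M" and r s :: real
  show "a + b + c = a + (b + c)" by transfer (simp add: algebra_simps)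
  show "a + b = b + a" by transfer (simp add: algebra_simps)
  show "0 + a = a" by transfer simp
  show "- a + a = 0" by transfer simp
  show "a - b = a + - b" by transfer simp
  show "r *\<^sub>R (a + b) = r *\<^sub>R a + r *\<^sub>R b" by transfer (simp add: algebra_simps)
  show "(r + s) *\<^sub>R a = r *\<^sub>R a + s *\<^sub>R a" by transfer (simp add: algebra_simps)
  show "r *\<^sub>R s *\<^sub>R a = (r * s) *\<^sub>R a" by transfer simp
  show "1 *\<^sub>R a = a" by transfer simp
  show "a * b * c = a * (b * c)" by transfer (simp add: matrix_mul_assoc)
  show "(a + b) * c = a * c + b * c" by transfer (vector matrix_matrix_mult_def sum.distrib[symmetric] field_simps)
  show "a * (b + c) = a * b + a * c" by transfer (simp add: matrix_add_ldistrib)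
  show "1 * a = a" by transfer simp
  show "a * 1 = a" by transfer simp
  show "(0::'a M) \<noteq> 1" 
  proof transfer
    show "(0::'a cmat) \<noteq> mat 1"
    proof
      assume "(0::'a cmat) = mat 1"
      then have "(0::'a cmat) $ i $ i = mat 1 $ i $ i" for i :: 'a by (simp only:)
      then show False by (simp add: mat_def)
    qed
  qed
  show "r *\<^sub>R a * b = r *\<^sub>R (a * b)" by transfer (simp add: scalar_matrix_assoc)
  show "a * r *\<^sub>R b = r *\<^sub>R (a * b)" by transfer (simp add: matrix_scalar_ac scalar_matrix_assoc)
  show "dist a b = norm (a - b)" by (simp add: dist_M_def)
  show "sgn a = inverse (norm a) *\<^sub>R a" by (simp add: sgn_M_def)
  show "uniformity = (INF e\<in>{0<..}. principal {(x, y). dist (x::'a M) y < e})" by (simp add: uniformity_M_def)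
  show "open U = (\<forall>x\<in>U. \<forall>\<^sub>F (x', y) in uniformity. x' = x \<longrightarrow> y \<in> U)" for U :: "'a M set"
    by (simp add: open_M_def)
  show "(norm a = 0) = (a = 0)"
  proof transfer
    fix A :: "'a cmat"
    have "opnorm A = 0 \<longleftrightarrow> (\<forall>v. A *v v = 0)"
      unfolding opnorm_def by (rule onorm_eq_0) simp
    also have "\<dots> \<longleftrightarrow> A = 0" by (auto simp: matrix_eq fun_eq_iff)
    finally show "(opnorm A = 0) = (A = 0)" .
  qed
  show "norm (a + b) \<le> norm a + norm b"
    by transfer (simp add: opnorm_def matrix_vector_mult_add_rdistrib onorm_triangle)
  show "norm (r *\<^sub>R a) = \<bar>r\<bar> * norm a"
    proof transfer
    fix r and A :: "'a cmat"
    show "opnorm (r *\<^sub>R A) = \<bar>r\<bar> * opnorm A"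
      unfolding opnorm_def scaleR_mv by (rule onorm_scaleR) simp
  qed
  show "norm (a * b) \<le> norm a * norm b"
  proof transfer
    fix A B :: "'a cmat"
    have "opnorm (A ** B) = onorm ((\<lambda>v. A *v v) \<circ> (\<lambda>v. B *v v))"
      by (simp add: opnorm_def o_def matrix_vector_mul_assoc)
    also have "\<dots> \<le> opnorm A * opnorm B" unfolding opnorm_def by (rule onorm_compose) simp_all
    finally show "opnorm (A ** B) \<le> opnorm A * opnorm B" .
  qed
  show "norm (1::'a M) = 1" by transfer (simp add: opnorm_def onorm_id)
qed
end


lemma norm_le_l1_vec: "norm (x::'a::real_normed_vector^'n::finite) \<le> (\<Sum>i\<in>UNIV. norm (x$i))"
  unfolding norm_vec_def by (rule L2_set_le_sum) simp

lemma norm_axis_complex: "norm (axis j (1::complex)) = 1"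
proof -
  have "(\<Sum>i\<in>UNIV. (norm (axis j (1::complex) $ i))\<^sup>2) = (\<Sum>i\<in>UNIV. if i = j then 1 else 0)"
    by (rule sum.cong) (auto simp: axis_def)
  then show ?thesis by (simp add: norm_vec_def L2_set_def)
qed

lemma entry_le_opnorm: "cmod (A $ i $ j) \<le> opnorm (A::'n::finite cmat)"
proof -
  have "(A *v axis j 1) $ i = A $ i $ j"
    by (simp add: matrix_vector_mult_def axis_def if_distrib cong: if_cong)
  then have "cmod (A $ i $ j) \<le> norm (A *v axis j 1)" using Finite_Cartesian_Product.norm_nth_le[of "A *v axis j 1" i] by simp
  also have "\<dots> \<le> opnorm A * norm (axis j (1::complex))"
    unfolding opnorm_def by (rule onorm) simp
  finally show ?thesis by (simp add: norm_axis_complex)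
qed

lemma entry_le_norm: "cmod (A $ i $ j) \<le> norm (A::'n::finite cmat)"
  using Finite_Cartesian_Product.norm_nth_le[of "A$i" j] Finite_Cartesian_Product.norm_nth_le[of A i] by linarith

lemma norm_rep_le: "norm (rep a) \<le> real CARD('n) * real CARD('n) * norm (a::'n::finite M)"
proof -
  have "norm (rep a) \<le> (\<Sum>i\<in>UNIV. norm (rep a $ i))" by (rule norm_le_l1_vec)
  also have "\<dots> \<le> (\<Sum>i\<in>(UNIV::'n set). \<Sum>j\<in>(UNIV::'n set). norm a)"
  proof (rule sum_mono)
    fix i
    have "norm (rep a $ i) \<le> (\<Sum>j\<in>UNIV. norm (rep a $ i $ j))" by (rule norm_le_l1_vec)
    also have "\<dots> \<le> (\<Sum>j\<in>(UNIV::'n set). norm a)"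
      by (rule sum_mono) (simp add: norm_M.rep_eq entry_le_opnorm)
    finally show "norm (rep a $ i) \<le> (\<Sum>j\<in>(UNIV::'n set). norm a)" .
  qed
  finally show ?thesis by simp
qed

lemma opnorm_le_norm: "opnorm (A::'n::finite cmat) \<le> real CARD('n) * real CARD('n) * norm A"
  unfolding opnorm_def
proof (rule onorm_le)
  fix x :: "complex^'n"
  have "norm (A *v x) \<le> (\<Sum>i\<in>UNIV. norm ((A *v x) $ i))" by (rule norm_le_l1_vec)
  also have "\<dots> \<le> (\<Sum>i\<in>(UNIV::'n set). \<Sum>j\<in>(UNIV::'n set). norm A * norm x)"
  proof (rule sum_mono)
    fix i
    have "norm ((A *v x) $ i) = norm (\<Sum>j\<in>UNIV. A $ i $ j * x $ j)"
      by (simp add: matrix_vector_mult_def)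
    also have "\<dots> \<le> (\<Sum>j\<in>UNIV. norm (A $ i $ j * x $ j))" by (rule norm_sum)
    also have "\<dots> \<le> (\<Sum>j\<in>(UNIV::'n set). norm A * norm x)"
      by (rule sum_mono) (simp add: norm_mult entry_le_norm Finite_Cartesian_Product.norm_nth_le mult_mono[OF entry_le_norm Finite_Cartesian_Product.norm_nth_le])
    finally show "norm ((A *v x) $ i) \<le> (\<Sum>j\<in>(UNIV::'n set). norm A * norm x)" .
  qed
  finally show "norm (A *v x) \<le> real CARD('n) * real CARD('n) * norm A * norm x" by simp
qed

lemma bl_rep: "bounded_linear (rep :: 'n::finite M \<Rightarrow> 'n cmat)"
  by (rule bounded_linear_intro[where K="real CARD('n) * real CARD('n)"])
    (auto simp: plus_M.rep_eq scaleR_M.rep_eq, metis norm_rep_le mult.commute)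

lemma bl_abs: "bounded_linear (abs :: 'n::finite cmat \<Rightarrow> 'n M)"
  by (rule bounded_linear_intro[where K="real CARD('n) * real CARD('n)"])
    (auto simp: plus_M.abs_eq scaleR_M.abs_eq norm_M.abs_eq eq_onp_def, metis opnorm_le_norm mult.commute)

instance M :: (finite) banach
proof
  fix X :: "nat \<Rightarrow> 'a M"
  assume "Cauchy X"
  then have "Cauchy (\<lambda>n. rep (X n))" by (rule bounded_linear.Cauchy[OF bl_rep])
  then obtain L where "(\<lambda>n. rep (X n)) \<longlonglongrightarrow> L" by (auto simp: Cauchy_convergent_iff convergent_def)
  then have "(\<lambda>n. abs (rep (X n))) \<longlonglongrightarrow> abs L" by (rule bounded_linear.tendsto[OF bl_abs])
  then show "convergent X" by (auto simp: convergent_def rep_inverse)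
qed


subsection \<open>Exponential\<close>

lemma mpow_Suc: "mpow A (Suc k) = A ** mpow A k"
  by (simp add: mpow_def)

lemma rep_power: "rep (a ^ k) = mpow (rep a) k"
  by (induction k) (simp_all add: mpow_def one_M.rep_eq times_M.rep_eq)

lemma rep_exp: "rep (exp a) = mexp (rep a)"
proof -
  have "(\<lambda>n. a ^ n /\<^sub>R fact n) sums exp a" by (rule exp_converges)
  then have "(\<lambda>n. rep (a ^ n /\<^sub>R fact n)) sums rep (exp a)"
    by (rule bounded_linear.sums[OF bl_rep])
  moreover have "rep (a ^ n /\<^sub>R fact n) = (1 / fact n) *\<^sub>R mpow (rep a) n" for n
    by (simp add: scaleR_M.rep_eq rep_power divide_inverse)
  ultimately have "(\<lambda>n. (1 / fact n) *\<^sub>R mpow (rep a) n) sums rep (exp a)" by simp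
  then show ?thesis unfolding mexp_def by (simp add: sums_iff)
qed

subsection \<open>Adjoint\<close>

lemma adj_mult: "adj (A ** B) = adj B ** adj (A::'n::finite cmat)"
  by (simp add: adj_def matrix_matrix_mult_def vec_eq_iff mult.commute)

lemma adj_add: "adj (A + B) = adj A + adj (B::'n::finite cmat)"
  by (simp add: adj_def vec_eq_iff)

lemma adj_diff: "adj (A - B) = adj A - adj (B::'n::finite cmat)"
  by (simp add: adj_def vec_eq_iff)

lemma adj_uminus: "adj (- A) = - adj (A::'n::finite cmat)"
  by (simp add: adj_def vec_eq_iff)

lemma adj_scaleR: "adj (r *\<^sub>R A) = r *\<^sub>R adj (A::'n::finite cmat)"
  by (simp add: adj_def vec_eq_iff)

lemma adj_one: "adj (mat 1 :: 'n::finite cmat) = mat 1"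
  by (simp add: adj_def vec_eq_iff mat_def)

lemma adj_adj: "adj (adj A) = (A::'n::finite cmat)"
  by (simp add: adj_def vec_eq_iff)

lemma bl_adj: "bounded_linear (adj :: 'n::finite cmat \<Rightarrow> 'n cmat)"
  by (simp add: linear_conv_bounded_linear[symmetric] linearI adj_add adj_scaleR)

definition star :: "'n::finite M \<Rightarrow> 'n M" where "star a = abs (adj (rep a))"

lemma rep_star: "rep (star a) = adj (rep a)"
  by (simp add: star_def abs_inverse)

lemma star_mult: "star (a * b) = star b * star a"
  by (simp add: star_def times_M.rep_eq adj_mult times_M.abs_eq eq_onp_def)

lemma star_add: "star (a + b) = star a + star b"
  by (simp add: star_def plus_M.rep_eq adj_add plus_M.abs_eq eq_onp_def)

lemma star_diff: "star (a - b) = star a - star b"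
  by (simp add: star_def minus_M.rep_eq adj_diff minus_M.abs_eq eq_onp_def)

lemma star_uminus: "star (- a) = - star a"
  by (simp add: star_def uminus_M.rep_eq adj_uminus uminus_M.abs_eq eq_onp_def)

lemma star_scaleR: "star (r *\<^sub>R a) = r *\<^sub>R star a"
  by (simp add: star_def scaleR_M.rep_eq adj_scaleR scaleR_M.abs_eq eq_onp_def)

lemma star_one: "star 1 = 1"
  by (metis adj_one one_M.rep_eq rep_inverse star_def)

lemma bl_star: "bounded_linear (star :: 'n::finite M \<Rightarrow> 'n M)"
proof -
  have "bounded_linear (abs \<circ> (adj \<circ> rep) :: 'n M \<Rightarrow> 'n M)"
    by (intro bounded_linear_compose[unfolded o_def[symmetric]] bl_abs bl_adj bl_rep)
  then show ?thesis by (simp add: star_def[abs_def] o_def)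
qed

lemma star_power: "star (a ^ k) = (star a) ^ k"
  by (induction k) (simp_all add: star_one star_mult power_commutes)

lemma star_exp: "star (exp a) = exp (star a)"
proof -
  have "(\<lambda>n. a ^ n /\<^sub>R fact n) sums exp a" by (rule exp_converges)
  then have "(\<lambda>n. star (a ^ n /\<^sub>R fact n)) sums star (exp a)"
    by (rule bounded_linear.sums[OF bl_star])
  then have "(\<lambda>n. (star a) ^ n /\<^sub>R fact n) sums star (exp a)"
    by (simp add: star_scaleR star_power)
  then show ?thesis using exp_converges[of "star a"] sums_unique2 by blast
qed

subsection \<open>Unitarity\<close>

lemma norm_sq_cdot: "complex_of_real ((norm (x::complex^'n::finite))\<^sup>2) = (\<Sum>i\<in>UNIV. cnj (x$i) * x$i)"
proof -
  have "(norm x)\<^sup>2 = (\<Sum>i\<in>UNIV. (cmod (x$i))\<^sup>2)"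
    by (simp add: norm_vec_def L2_set_def sum_nonneg)
  then have "complex_of_real ((norm x)\<^sup>2) = (\<Sum>i\<in>UNIV. complex_of_real ((cmod (x$i))\<^sup>2))"
    by (simp only: of_real_sum)
  also have "\<dots> = (\<Sum>i\<in>UNIV. cnj (x$i) * x$i)"
    by (rule sum.cong) (simp_all only: complex_norm_square mult.commute)
  finally show ?thesis .
qed

lemma cdot_mv: "(\<Sum>i\<in>UNIV. cnj ((A *v x)$i) * y$i) = (\<Sum>j\<in>UNIV. cnj (x$j) * (adj A *v y)$j)"
  for A :: "'n::finite cmat"
proof -
  have "(\<Sum>i\<in>UNIV. cnj ((A *v x)$i) * y$i) = (\<Sum>i\<in>UNIV. \<Sum>j\<in>UNIV. cnj (A$i$j) * cnj (x$j) * y$i)"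
    by (simp add: matrix_vector_mult_def sum_distrib_right)
  also have "\<dots> = (\<Sum>j\<in>UNIV. \<Sum>i\<in>UNIV. cnj (A$i$j) * cnj (x$j) * y$i)"
    by (rule sum.swap)
  also have "\<dots> = (\<Sum>j\<in>UNIV. cnj (x$j) * (adj A *v y)$j)"
    by (simp add: matrix_vector_mult_def sum_distrib_left adj_def mult_ac)
  finally show ?thesis .
qed

lemma unitary_norm_le: assumes "star u * u = 1" shows "norm u \<le> 1"
proof -
  have U: "adj (rep u) ** rep u = mat 1"
    using arg_cong[OF assms, of rep] by (simp add: times_M.rep_eq rep_star one_M.rep_eq)
  have "norm (rep u *v x) \<le> 1 * norm x" for x
  proof -
    have "complex_of_real ((norm (rep u *v x))\<^sup>2) = (\<Sum>j\<in>UNIV. cnj (x$j) * (adj (rep u) *v (rep u *v x))$j)"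
      by (simp only: norm_sq_cdot cdot_mv)
    also have "\<dots> = complex_of_real ((norm x)\<^sup>2)"
      by (simp only: matrix_vector_mul_assoc U matrix_vector_mul_lid norm_sq_cdot)
    finally have "(norm (rep u *v x))\<^sup>2 = (norm x)\<^sup>2" using of_real_eq_iff by blast
    then show ?thesis by simp
  qed
  then show ?thesis unfolding norm_M.rep_eq opnorm_def by (intro onorm_le) simp
qed

lemma skew_exp_norm: assumes "star X = - X" shows "norm (exp X) \<le> 1"
proof (rule unitary_norm_le)
  have "exp (- X) * exp (- (- X)) = 1" by (rule exp_minus_inverse)
  then show "star (exp X) * exp X = 1" by (simp add: star_exp assms)
qed



lemma exp_sc_cont: "continuous_on S (\<lambda>t. exp (t *\<^sub>R (X::'a::{real_normed_algebra_1,banach})))"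
  by (rule continuous_on_vector_derivative) (rule exp_scaleR_has_vector_derivative_right)

lemma exp_sc_cont_comp [continuous_intros]:
  "continuous_on S f \<Longrightarrow> continuous_on S (\<lambda>t. exp (f t *\<^sub>R (X::'a::{real_normed_algebra_1,banach})))"
  using continuous_on_compose2[OF exp_sc_cont[of UNIV X], of S f] by auto

lemma exp_sc_inv1: "exp (t *\<^sub>R - X) * exp (t *\<^sub>R X) = (1::'a::{real_normed_algebra_1,banach})"
  using exp_minus_inverse[of "- (t *\<^sub>R X)"] by simp

lemma exp_sc_inv2: "exp (t *\<^sub>R X) * exp (t *\<^sub>R - X) = (1::'a::{real_normed_algebra_1,banach})"
  using exp_minus_inverse[of "t *\<^sub>R X"] by simp

lemma deriv_int_bound:
  fixes f :: "real \<Rightarrow> 'a::real_normed_vector"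
  assumes t: "0 \<le> t"
    and f': "\<And>x. (f has_vector_derivative f' x) (at x)"
    and h: "continuous_on {0..t} h"
    and bnd: "\<And>x. x \<in> {0..t} \<Longrightarrow> norm (f' x) \<le> h x"
  shows "norm (f t - f 0) \<le> integral {0..t} h"
proof (cases "t = 0")
  case True then show ?thesis by simp
next
  case False
  with t have t0: "0 < t" by simp
  have phi: "((\<lambda>u. integral {0..u} h) has_vector_derivative h x) (at x within {0..t})" if "x \<in> {0..t}" for x
    by (rule integral_has_vector_derivative[OF h that])
  have "norm (f t - f 0) \<le> integral {0..t} h - integral {0..0} h"
  proof (rule differentiable_bound_general[OF t0])
    show "continuous_on {0..t} f"
      by (rule continuous_on_vector_derivative) (rule has_vector_derivative_at_within[OF f'])
    show "continuous_on {0..t} (\<lambda>u. integral {0..u} h)"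
      by (rule continuous_on_vector_derivative) (rule phi)
    show "(f has_vector_derivative f' x) (at x)" for x by (rule f')
    show "((\<lambda>u. integral {0..u} h) has_vector_derivative h x) (at x)" if "0 < x" "x < t" for x
      using phi[of x] that by (simp add: at_within_Icc_at)
    show "norm (f' x) \<le> h x" if "0 < x" "x < t" for x using bnd that by simp
  qed
  then show ?thesis by simp
qed


lemma vd_eq: "(f has_vector_derivative D) F \<Longrightarrow> D = D' \<Longrightarrow> (f has_vector_derivative D') F"
  by simp

lemma expi1: "exp (- (t *\<^sub>R X)) * (exp (t *\<^sub>R X) * Y) = (Y::'a::{real_normed_algebra_1,banach})"
  using exp_minus_inverse[of "- (t *\<^sub>R X)"] by (simp add: mult.assoc[symmetric])

lemma expi2: "exp (t *\<^sub>R X) * (exp (- (t *\<^sub>R X)) * Y) = (Y::'a::{real_normed_algebra_1,banach})"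
  using exp_minus_inverse[of "t *\<^sub>R X"] by (simp add: mult.assoc[symmetric])

lemma expi1': "exp (- (t *\<^sub>R X)) * exp (t *\<^sub>R X) = (1::'a::{real_normed_algebra_1,banach})"
  using exp_minus_inverse[of "- (t *\<^sub>R X)"] by simp

lemma expi2': "exp (t *\<^sub>R X) * exp (- (t *\<^sub>R X)) = (1::'a::{real_normed_algebra_1,banach})"
  using exp_minus_inverse[of "t *\<^sub>R X"] by simp

lemma dexpR: "((\<lambda>s. exp (s *\<^sub>R X)) has_vector_derivative exp (s *\<^sub>R X) * X) (at s)"
  for X :: "'a::{real_normed_algebra_1,banach}"
  by (rule exp_scaleR_has_vector_derivative_right)

lemma dexpL: "((\<lambda>s. exp (s *\<^sub>R X)) has_vector_derivative X * exp (s *\<^sub>R X)) (at s)"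
  for X :: "'a::{real_normed_algebra_1,banach}"
  by (rule exp_scaleR_has_vector_derivative_left)

lemma dexpmR: "((\<lambda>s. exp (- (s *\<^sub>R X))) has_vector_derivative exp (- (s *\<^sub>R X)) * (- X)) (at s)"
  for X :: "'a::{real_normed_algebra_1,banach}"
  using exp_scaleR_has_vector_derivative_right[of "- X" s UNIV] by simp

lemma dexpmL: "((\<lambda>s. exp (- (s *\<^sub>R X))) has_vector_derivative (- X) * exp (- (s *\<^sub>R X))) (at s)"
  for X :: "'a::{real_normed_algebra_1,banach}"
  using exp_scaleR_has_vector_derivative_left[of "- X" s] by simp

lemma norm3: "norm a \<le> 1 \<Longrightarrow> norm b \<le> 1 \<Longrightarrow> norm (a * m * b) \<le> norm (m::'a::real_normed_algebra)"
proof -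
  assume a: "norm a \<le> 1" and b: "norm b \<le> 1"
  have "norm (a * m * b) \<le> norm a * norm m * norm b"
    by (metis norm_mult_ineq mult_right_mono norm_ge_zero order_trans)
  also have "\<dots> \<le> 1 * norm m * 1"
    using a b by (intro mult_mono) (auto intro: mult_right_le_one_le)
  finally show ?thesis by simp
qed

lemma normL: "norm a \<le> 1 \<Longrightarrow> norm (a * m) \<le> norm (m::'a::real_normed_algebra)"
proof -
  assume a: "norm a \<le> 1"
  have "norm (a * m) \<le> norm a * norm m" by (rule norm_mult_ineq)
  also have "\<dots> \<le> 1 * norm m" using a by (intro mult_right_mono) auto
  finally show ?thesis by simp
qed

lemma normR: "norm a \<le> 1 \<Longrightarrow> norm (m * a) \<le> norm (m::'a::real_normed_algebra)"
proof -
  assume a: "norm a \<le> 1"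
  have "norm (m * a) \<le> norm m * norm a" by (rule norm_mult_ineq)
  also have "\<dots> \<le> norm m * 1" using a by (intro mult_left_mono) auto
  finally show ?thesis by simp
qed

lemma nm_exp: "(\<And>t. norm (exp (t *\<^sub>R X)) \<le> 1) \<Longrightarrow> norm (exp (- (s *\<^sub>R X))) \<le> (1::real)"
  for X :: "'a::{real_normed_algebra_1,banach}"
  by (metis scaleR_minus_left)

lemma comm_bound:
  fixes A C X :: "'a::{real_normed_algebra_1,banach}"
  assumes nA: "\<And>t. norm (exp (t *\<^sub>R A)) \<le> 1"
    and nT: "\<And>t. norm (exp (t *\<^sub>R (A + C))) \<le> 1"
    and v: "0 \<le> v"
    and h: "continuous_on {0..v} h"
    and hb: "\<And>s. s \<in> {0..v} \<Longrightarrow> norm (X * (exp (- (s *\<^sub>R A)) * C * exp (s *\<^sub>R A))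
                                     - (exp (- (s *\<^sub>R A)) * C * exp (s *\<^sub>R A)) * X) \<le> h s"
  shows "norm ((exp (- (v *\<^sub>R A)) * exp (v *\<^sub>R (A + C))) * X - X * (exp (- (v *\<^sub>R A)) * exp (v *\<^sub>R (A + C))))
           \<le> integral {0..v} h"
proof -
  define G where "G = (\<lambda>s. exp (- (s *\<^sub>R (A + C))) * exp (s *\<^sub>R A) * X * exp (- (s *\<^sub>R A)) * exp (s *\<^sub>R (A + C)))"
  define G' where "G' = (\<lambda>s. exp (- (s *\<^sub>R (A + C))) * (exp (s *\<^sub>R A) * X * exp (- (s *\<^sub>R A)) * C
       - C * (exp (s *\<^sub>R A) * X * exp (- (s *\<^sub>R A)))) * exp (s *\<^sub>R (A + C)))"
  have dG: "(G has_vector_derivative G' s) (at s)" for s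
    unfolding G_def
    apply (rule vd_eq[OF has_vector_derivative_mult[OF has_vector_derivative_mult[OF
             has_vector_derivative_mult[OF has_vector_derivative_mult[OF dexpmR dexpL]
             has_vector_derivative_const] dexpmR] dexpL]])
    apply (simp add: G'_def algebra_simps)
    done
  have bG: "norm (G' s) \<le> h s" if s: "s \<in> {0..v}" for s
  proof -
    let ?q = "exp (s *\<^sub>R A)" and ?r = "exp (- (s *\<^sub>R A))"
    have "?q * X * ?r * C - C * (?q * X * ?r) = ?q * (X * (?r * C * ?q) - (?r * C * ?q) * X) * ?r"
      by (simp add: algebra_simps expi1 expi2 expi1' expi2')
    then have "norm (G' s) \<le> norm (?q * (X * (?r * C * ?q) - (?r * C * ?q) * X) * ?r)"
      unfolding G'_def by (metis norm3 nm_exp nT)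
    also have "\<dots> \<le> norm (X * (?r * C * ?q) - (?r * C * ?q) * X)"
      by (rule norm3) (use nA nm_exp[OF nA] in auto)
    also have "\<dots> \<le> h s" using hb[OF s] by simp
    finally show ?thesis .
  qed
  have "norm (G v - G 0) \<le> integral {0..v} h"
    by (rule deriv_int_bound[OF v dG h bG])
  moreover have "G 0 = X" by (simp add: G_def)
  moreover have "(exp (- (v *\<^sub>R A)) * exp (v *\<^sub>R (A + C))) * X - X * (exp (- (v *\<^sub>R A)) * exp (v *\<^sub>R (A + C)))
     = (exp (- (v *\<^sub>R A)) * exp (v *\<^sub>R (A + C))) * (X - G v)"
  proof -
    have "(exp (- (v *\<^sub>R A)) * exp (v *\<^sub>R (A + C))) * G v = X * (exp (- (v *\<^sub>R A)) * exp (v *\<^sub>R (A + C)))"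
      unfolding G_def by (simp only: mult.assoc expi1 expi2)
    then show ?thesis by (simp add: right_diff_distrib)
  qed
  moreover have "norm ((exp (- (v *\<^sub>R A)) * exp (v *\<^sub>R (A + C))) * (X - G v)) \<le> norm (X - G v)"
    unfolding mult.assoc using normL[OF nm_exp[OF nA], of v] normL[OF nT, of v] order_trans by blast
  ultimately show ?thesis by (simp add: norm_minus_commute)
qed


lemma two_bound:
  fixes A B C :: "'a::{real_normed_algebra_1,banach}"
  assumes nA: "\<And>t. norm (exp (t *\<^sub>R A)) \<le> 1"
    and nS: "\<And>t. norm (exp (t *\<^sub>R (A + C + B))) \<le> 1"
    and nB: "\<And>t. norm (exp (t *\<^sub>R (A + B))) \<le> 1"
    and t: "0 \<le> t"
    and g: "continuous_on {0..t} g"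
    and gb: "\<And>v. v \<in> {0..t} \<Longrightarrow>
       norm ((exp (- (v *\<^sub>R A)) * exp (v *\<^sub>R (A + C))) * (exp (- (v *\<^sub>R A)) * B * exp (v *\<^sub>R A))
           - (exp (- (v *\<^sub>R A)) * B * exp (v *\<^sub>R A)) * (exp (- (v *\<^sub>R A)) * exp (v *\<^sub>R (A + C)))) \<le> g v"
  shows "norm (exp (- (t *\<^sub>R A)) * exp (t *\<^sub>R (A + C + B))
           - exp (- (t *\<^sub>R A)) * exp (t *\<^sub>R (A + C)) * (exp (- (t *\<^sub>R A)) * exp (t *\<^sub>R (A + B))))
         \<le> integral {0..t} g"
proof -
  define Z where "Z = (\<lambda>v. exp (- (v *\<^sub>R (A + C + B))) * exp (v *\<^sub>R (A + C)) * exp (- (v *\<^sub>R A)) * exp (v *\<^sub>R (A + B)))"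
  define Z' where "Z' = (\<lambda>v. exp (- (v *\<^sub>R (A + C + B))) * (exp (v *\<^sub>R (A + C)) * exp (- (v *\<^sub>R A)) * B
       - B * (exp (v *\<^sub>R (A + C)) * exp (- (v *\<^sub>R A)))) * exp (v *\<^sub>R (A + B)))"
  have dZ: "(Z has_vector_derivative Z' s) (at s)" for s
    unfolding Z_def
    apply (rule vd_eq[OF has_vector_derivative_mult[OF has_vector_derivative_mult[OF
             has_vector_derivative_mult[OF dexpmR dexpL] dexpmR] dexpL]])
    apply (simp add: Z'_def algebra_simps)
    done
  have bZ: "norm (Z' v) \<le> g v" if v: "v \<in> {0..t}" for v
  proof -
    let ?q = "exp (v *\<^sub>R A)" and ?r = "exp (- (v *\<^sub>R A))" and ?b = "exp (v *\<^sub>R (A + C))"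
    have "?b * ?r * B - B * (?b * ?r) = ?q * ((?r * ?b) * (?r * B * ?q) - (?r * B * ?q) * (?r * ?b)) * ?r"
      by (simp add: algebra_simps expi1 expi2 expi1' expi2')
    then have "norm (Z' v) \<le> norm (?q * ((?r * ?b) * (?r * B * ?q) - (?r * B * ?q) * (?r * ?b)) * ?r)"
      unfolding Z'_def by (metis norm3 nm_exp nS nB)
    also have "\<dots> \<le> norm ((?r * ?b) * (?r * B * ?q) - (?r * B * ?q) * (?r * ?b))"
      by (rule norm3) (use nA nm_exp[OF nA] in auto)
    also have "\<dots> \<le> g v" using gb[OF v] by simp
    finally show ?thesis .
  qed
  have "norm (Z t - Z 0) \<le> integral {0..t} g"
    by (rule deriv_int_bound[OF t dZ g bZ])
  moreover have "Z 0 = 1" by (simp add: Z_def)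
  moreover have "exp (- (t *\<^sub>R A)) * exp (t *\<^sub>R (A + C + B))
           - exp (- (t *\<^sub>R A)) * exp (t *\<^sub>R (A + C)) * (exp (- (t *\<^sub>R A)) * exp (t *\<^sub>R (A + B)))
      = exp (- (t *\<^sub>R A)) * (exp (t *\<^sub>R (A + C + B)) * (1 - Z t))"
  proof -
    have "exp (t *\<^sub>R (A + C + B)) * Z t = exp (t *\<^sub>R (A + C)) * (exp (- (t *\<^sub>R A)) * exp (t *\<^sub>R (A + B)))"
      unfolding Z_def by (simp only: mult.assoc expi2)
    then show ?thesis by (simp add: right_diff_distrib mult.assoc)
  qed
  moreover have "norm (exp (- (t *\<^sub>R A)) * (exp (t *\<^sub>R (A + C + B)) * (1 - Z t))) \<le> norm (1 - Z t)"
    using normL[OF nm_exp[OF nA], of t] normL[OF nS, of t] order_trans by blast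
  ultimately show ?thesis by (simp add: norm_minus_commute)
qed


lemma cont_param_int:
  fixes F :: "real \<Rightarrow> real \<Rightarrow> real"
  assumes F: "continuous_on UNIV (\<lambda>p. F (fst p) (snd p))"
  shows "continuous_on {0..t} (\<lambda>v. integral {0..v} (\<lambda>s. F s v))"
proof -
  have Fc: "continuous_on S (\<lambda>x. F (f x) (g x))" if "continuous_on S f" "continuous_on S g" for S and f g :: "'z::topological_space \<Rightarrow> real"
    using continuous_on_compose2[OF F, of S "\<lambda>x. (f x, g x)"] that
    by (auto intro: continuous_on_Pair)
  have c1: "continuous_on {0..t} (\<lambda>v. integral (cbox 0 t) (\<lambda>s. F (min s v) v))"
    by (rule integral_continuous_on_param)
       (auto intro!: Fc continuous_intros simp: split_beta)
  have c2: "continuous_on {0..t} (\<lambda>v. (t - v) * F v v)"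
    by (auto intro!: Fc continuous_intros)
  have eq: "integral {0..v} (\<lambda>s. F s v) = integral (cbox 0 t) (\<lambda>s. F (min s v) v) - (t - v) * F v v"
    if v: "v \<in> {0..t}" for v
  proof -
    have int: "(\<lambda>s. F (min s v) v) integrable_on {0..t}"
      by (rule integrable_continuous_real) (auto intro!: Fc continuous_intros)
    have "integral {0..v} (\<lambda>s. F (min s v) v) + integral {v..t} (\<lambda>s. F (min s v) v)
          = integral {0..t} (\<lambda>s. F (min s v) v)"
      by (rule Henstock_Kurzweil_Integration.integral_combine) (use v int in auto)
    moreover have "integral {0..v} (\<lambda>s. F (min s v) v) = integral {0..v} (\<lambda>s. F s v)"
      by (rule integral_cong) auto
    moreover have "integral {v..t} (\<lambda>s. F (min s v) v) = integral {v..t} (\<lambda>s. F v v)"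
      by (rule integral_cong) auto
    moreover have "integral {v..t} (\<lambda>s. F v v) = (t - v) * F v v" using v by simp
    ultimately show ?thesis unfolding cbox_interval by linarith
  qed
  have "continuous_on {0..t} (\<lambda>v. integral (cbox 0 t) (\<lambda>s. F (min s v) v) - (t - v) * F v v)"
    by (intro continuous_on_diff c1 c2)
  then show ?thesis using eq continuous_on_eq by (metis (no_types, lifting))
qed


lemma exp_sc_cont_comp2 [continuous_intros]:
  "continuous_on S f \<Longrightarrow> continuous_on S (\<lambda>t. exp (- (f t *\<^sub>R (X::'a::{real_normed_algebra_1,banach}))))"
  using exp_sc_cont_comp[of S "\<lambda>t. - f t" X] continuous_on_minus[of S f] by simp

lemma foldr_mult1: "foldr (*) xs y = foldr (*) xs 1 * (y::'a::monoid_mult)"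
  by (induction xs) (simp_all add: mult.assoc)

lemma norm_comm_sum:
  fixes X :: "'a::real_normed_algebra"
  shows "norm (X * sum Y I - sum Y I * X) \<le> (\<Sum>a\<in>I. norm (Y a * X - X * Y a))"
proof -
  have "X * sum Y I - sum Y I * X = (\<Sum>a\<in>I. X * Y a - Y a * X)"
    by (simp add: sum_distrib_left sum_distrib_right sum_subtractf)
  then have "norm (X * sum Y I - sum Y I * X) \<le> (\<Sum>a\<in>I. norm (X * Y a - Y a * X))"
    by (simp add: norm_sum)
  also have "\<dots> = (\<Sum>a\<in>I. norm (Y a * X - X * Y a))"
    by (simp add: norm_minus_commute)
  finally show ?thesis .
qed

theorem abstract_main:
  fixes A :: "'a::{real_normed_algebra_1,banach}" and B :: "nat \<Rightarrow> 'a"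
  assumes nI: "\<And>I t. I \<subseteq> {1..\<Gamma>} \<Longrightarrow> norm (exp (t *\<^sub>R (A + sum B I))) \<le> 1"
    and t: "0 \<le> t"
  shows "norm (exp (t *\<^sub>R (A + sum B {1..\<Gamma>}))
           - exp (t *\<^sub>R A) * foldr (*) (map (\<lambda>\<gamma>. exp (- (t *\<^sub>R A)) * exp (t *\<^sub>R (A + B \<gamma>))) [1..<\<Gamma>+1]) 1)
         \<le> integral {0..t} (\<lambda>v. integral {0..v} (\<lambda>s.
              \<Sum>(a, b) \<in> {(a, b). 1 \<le> a \<and> a < b \<and> b \<le> \<Gamma>}.
                norm ((exp (- (s *\<^sub>R A)) * B a * exp (s *\<^sub>R A)) * (exp (- (v *\<^sub>R A)) * B b * exp (v *\<^sub>R A))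
                    - (exp (- (v *\<^sub>R A)) * B b * exp (v *\<^sub>R A)) * (exp (- (s *\<^sub>R A)) * B a * exp (s *\<^sub>R A)))))"
proof -
  define Bt where "Bt = (\<lambda>a s. exp (- (s *\<^sub>R A)) * B a * exp (s *\<^sub>R A))"
  define F where "F = (\<lambda>a b s v. norm (Bt a s * Bt b v - Bt b v * Bt a s))"
  define g where "g = (\<lambda>b v. integral {0..v} (\<lambda>s. \<Sum>a\<in>{1..<b}. F a b s v))"
  define Q where "Q = (\<lambda>k. exp (- (t *\<^sub>R A)) * exp (t *\<^sub>R (A + sum B {1..k})))"
  define V where "V = (\<lambda>\<gamma>. exp (- (t *\<^sub>R A)) * exp (t *\<^sub>R (A + B \<gamma>)))"
  define P where "P = (\<lambda>k. foldr (*) (map V [1..<k+1]) 1)"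
  have nA: "norm (exp (s *\<^sub>R A)) \<le> 1" for s using nI[of "{}" s] by simp
  have nV: "norm (V \<gamma>) \<le> 1" if "\<gamma> \<in> {1..\<Gamma>}" for \<gamma>
  proof -
    have "norm (exp (t *\<^sub>R (A + B \<gamma>))) \<le> 1" using nI[of "{\<gamma>}" t] that by simp
    then show ?thesis unfolding V_def using normL[OF nm_exp[OF nA], of t] order_trans by blast
  qed
  have Fcont: "continuous_on UNIV (\<lambda>p. \<Sum>a\<in>I. F a b (fst p) (snd p))" for I b
    unfolding F_def Bt_def by (intro continuous_intros)
  have gcont: "continuous_on {0..t} (g b)" for b
    unfolding g_def
    using cont_param_int[of "\<lambda>s v. \<Sum>a\<in>{1..<b}. F a b s v" t] Fcont by simp
  have step: "norm (Q k - P k) \<le> (\<Sum>b\<in>{1..k}. integral {0..t} (g b))" if "k \<le> \<Gamma>" for k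
    using that
  proof (induction k)
    case 0
    then show ?case by (simp add: Q_def P_def expi1')
  next
    case (Suc k)
    have PS: "P (Suc k) = P k * V (Suc k)"
    proof -
      have "[1..<Suc k + 1] = [1..<k+1] @ [Suc k]" by simp
      then have "P (Suc k) = foldr (*) (map V [1..<k+1]) (V (Suc k))" by (simp add: P_def)
      then show ?thesis unfolding foldr_mult1[of "map V [1..<k+1]" "V (Suc k)"] P_def .
    qed
    have QS: "Q (Suc k) = exp (- (t *\<^sub>R A)) * exp (t *\<^sub>R (A + sum B {1..k} + B (Suc k)))"
      by (simp add: Q_def add.assoc)
    have two: "norm (Q (Suc k) - Q k * V (Suc k)) \<le> integral {0..t} (g (Suc k))"
      unfolding QS unfolding Q_def V_def
    proof (rule two_bound[OF nA _ _ t gcont])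
      show "norm (exp (s *\<^sub>R (A + sum B {1..k} + B (Suc k)))) \<le> 1" for s
        using nI[of "{1..Suc k}" s] Suc.prems by (simp add: add.assoc)
      show "norm (exp (s *\<^sub>R (A + B (Suc k)))) \<le> 1" for s
        using nI[of "{Suc k}" s] Suc.prems by simp
      fix v assume v: "v \<in> {0..t}"
      have "norm ((exp (- (v *\<^sub>R A)) * exp (v *\<^sub>R (A + sum B {1..k}))) * Bt (Suc k) v
              - Bt (Suc k) v * (exp (- (v *\<^sub>R A)) * exp (v *\<^sub>R (A + sum B {1..k}))))
            \<le> integral {0..v} (\<lambda>s. \<Sum>a\<in>{1..<Suc k}. F a (Suc k) s v)"
      proof (rule comm_bound[OF nA])
        show "norm (exp (s *\<^sub>R (A + sum B {1..k}))) \<le> 1" for s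
          using nI[of "{1..k}" s] Suc.prems by simp
        show "0 \<le> v" using v by simp
        show "continuous_on {0..v} (\<lambda>s. \<Sum>a\<in>{1..<Suc k}. F a (Suc k) s v)"
          unfolding F_def Bt_def by (intro continuous_intros)
        fix s assume s: "s \<in> {0..v}"
        have "exp (- (s *\<^sub>R A)) * sum B {1..k} * exp (s *\<^sub>R A) = (\<Sum>a\<in>{1..<Suc k}. Bt a s)"
          unfolding Bt_def by (simp add: sum_distrib_left sum_distrib_right atLeastLessThanSuc_atLeastAtMost)
        then show "norm (Bt (Suc k) v * (exp (- (s *\<^sub>R A)) * sum B {1..k} * exp (s *\<^sub>R A))
             - exp (- (s *\<^sub>R A)) * sum B {1..k} * exp (s *\<^sub>R A) * Bt (Suc k) v)
            \<le> (\<Sum>a\<in>{1..<Suc k}. F a (Suc k) s v)"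
          unfolding F_def using norm_comm_sum[of "Bt (Suc k) v" "\<lambda>a. Bt a s" "{1..<Suc k}"] by simp
      qed
      then show "norm ((exp (- (v *\<^sub>R A)) * exp (v *\<^sub>R (A + sum B {1..k}))) * (exp (- (v *\<^sub>R A)) * B (Suc k) * exp (v *\<^sub>R A))
           - (exp (- (v *\<^sub>R A)) * B (Suc k) * exp (v *\<^sub>R A)) * (exp (- (v *\<^sub>R A)) * exp (v *\<^sub>R (A + sum B {1..k}))))
           \<le> g (Suc k) v"
        unfolding g_def Bt_def by simp
    qed
    have "Q (Suc k) - P (Suc k) = (Q (Suc k) - Q k * V (Suc k)) + (Q k - P k) * V (Suc k)"
      by (simp add: PS algebra_simps)
    then have "norm (Q (Suc k) - P (Suc k)) \<le> norm (Q (Suc k) - Q k * V (Suc k)) + norm ((Q k - P k) * V (Suc k))"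
      by (metis norm_triangle_ineq)
    also have "norm ((Q k - P k) * V (Suc k)) \<le> norm (Q k - P k)"
      by (rule normR) (use nV Suc.prems in auto)
    also have "norm (Q k - P k) \<le> (\<Sum>b\<in>{1..k}. integral {0..t} (g b))"
      using Suc by simp
    finally show ?case using two by simp
  qed
  have main: "norm (Q \<Gamma> - P \<Gamma>) \<le> (\<Sum>b\<in>{1..\<Gamma>}. integral {0..t} (g b))" by (rule step) simp
  have "exp (t *\<^sub>R (A + sum B {1..\<Gamma>})) - exp (t *\<^sub>R A) * P \<Gamma> = exp (t *\<^sub>R A) * (Q \<Gamma> - P \<Gamma>)"
    by (simp add: Q_def right_diff_distrib mult.assoc[symmetric] expi2')
  then have "norm (exp (t *\<^sub>R (A + sum B {1..\<Gamma>})) - exp (t *\<^sub>R A) * P \<Gamma>) \<le> norm (Q \<Gamma> - P \<Gamma>)"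
    using normL[OF nA] by metis
  also note main
  also have "(\<Sum>b\<in>{1..\<Gamma>}. integral {0..t} (g b)) = integral {0..t} (\<lambda>v. \<Sum>b\<in>{1..\<Gamma>}. g b v)"
    by (rule integral_sum[symmetric]) (auto intro: integrable_continuous_real gcont)
  also have "\<dots> = integral {0..t} (\<lambda>v. integral {0..v} (\<lambda>s. \<Sum>b\<in>{1..\<Gamma>}. \<Sum>a\<in>{1..<b}. F a b s v))"
  proof (rule integral_cong)
    fix v
    show "(\<Sum>b\<in>{1..\<Gamma>}. g b v) = integral {0..v} (\<lambda>s. \<Sum>b\<in>{1..\<Gamma>}. \<Sum>a\<in>{1..<b}. F a b s v)"
      unfolding g_def
    proof (rule integral_sum[symmetric])
      show "finite {1..\<Gamma>}" by simp
      fix b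
      have "continuous_on UNIV (\<lambda>s. \<Sum>a\<in>{1..<b}. F a b s v)"
        unfolding F_def Bt_def by (intro continuous_intros)
      then show "(\<lambda>s. \<Sum>a\<in>{1..<b}. F a b s v) integrable_on {0..v}"
        by (intro integrable_continuous_real) (auto intro: continuous_on_subset)
    qed
  qed
  also have "\<dots> = integral {0..t} (\<lambda>v. integral {0..v} (\<lambda>s.
              \<Sum>(a, b) \<in> {(a, b). 1 \<le> a \<and> a < b \<and> b \<le> \<Gamma>}. F a b s v))"
  proof -
    have "(\<Sum>b\<in>{1..\<Gamma>}. \<Sum>a\<in>{1..<b}. f a b) = (\<Sum>(a, b) \<in> {(a, b). 1 \<le> a \<and> a < b \<and> b \<le> \<Gamma>}. f a b)"
      for f :: "nat \<Rightarrow> nat \<Rightarrow> real"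
    proof -
      have "(\<Sum>b\<in>{1..\<Gamma>}. \<Sum>a\<in>{1..<b}. f a b) = (\<Sum>(b, a)\<in>Sigma {1..\<Gamma>} (\<lambda>b. {1..<b}). f a b)"
        by (rule sum.Sigma) auto
      also have "\<dots> = (\<Sum>(a, b) \<in> {(a, b). 1 \<le> a \<and> a < b \<and> b \<le> \<Gamma>}. f a b)"
        by (rule sum.reindex_bij_witness[of _ "\<lambda>(a, b). (b, a)" "\<lambda>(b, a). (a, b)"]) auto
      finally show ?thesis .
    qed
    then show ?thesis by simp
  qed
  finally show ?thesis unfolding P_def V_def F_def Bt_def .
qed



lemma cscale_add: "cscale c (A + B) = cscale c A + cscale c (B::'n::finite cmat)"
  by (simp add: cscale_def vec_eq_iff distrib_left)

lemma cscale_zero: "cscale c (0::'n::finite cmat) = 0"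
  by (simp add: cscale_def vec_eq_iff)

lemma cscale_sum: "cscale c (sum f I) = (\<Sum>i\<in>I. cscale c (f i :: 'n::finite cmat))"
  by (induction I rule: infinite_finite_induct) (simp_all add: cscale_add cscale_zero)

lemma scaleR_complex_ofr: "r *\<^sub>R (z::complex) = complex_of_real r * z"
  by (simp add: scaleR_conv_of_real)

lemma cscale_of_real: "cscale (complex_of_real r) A = r *\<^sub>R (A::'n::finite cmat)"
  by (simp add: cscale_def vec_eq_iff scaleR_complex_ofr)

lemma cscale_mult_real: "cscale (c * complex_of_real r) A = r *\<^sub>R cscale c (A::'n::finite cmat)"
  by (simp add: cscale_def vec_eq_iff scaleR_complex_ofr mult_ac)

lemma cscale_mult_real2: "cscale (- (c * complex_of_real r)) A = r *\<^sub>R cscale (- c) (A::'n::finite cmat)"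
  by (simp add: cscale_def vec_eq_iff scaleR_complex_ofr mult_ac)

lemma cscale_scaleR: "cscale c (r *\<^sub>R A) = r *\<^sub>R cscale c (A::'n::finite cmat)"
  by (simp add: cscale_def vec_eq_iff scaleR_complex_ofr mult_ac)

lemma cscale_uminus: "cscale (- c) A = - cscale c (A::'n::finite cmat)"
  by (simp add: cscale_def vec_eq_iff)

lemma cscale_left: "cscale c A = cscale c (mat 1) ** (A::'n::finite cmat)"
  by (simp add: cscale_def vec_eq_iff matrix_matrix_mult_def mat_def if_distrib if_distribR
      sum.delta cong: if_cong)

lemma cscale_right: "cscale c A = (A::'n::finite cmat) ** cscale c (mat 1)"
  by (simp add: cscale_def vec_eq_iff matrix_matrix_mult_def mat_def if_distrib if_distribR
      sum.delta' mult.commute cong: if_cong)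

lemma cscale_cscale: "cscale c (cscale d A) = cscale (c * d) (A::'n::finite cmat)"
  by (simp add: cscale_def vec_eq_iff mult.assoc)

lemma adj_cscale: "adj (cscale c A) = cscale (cnj c) (adj (A::'n::finite cmat))"
  by (simp add: cscale_def vec_eq_iff adj_def)

lemma cscale_one: "cscale 1 A = (A::'n::finite cmat)"
  by (simp add: cscale_def vec_eq_iff)

definition ci :: "'n::finite M" where "ci = abs (cscale (- \<i>) (mat 1))"

lemma rep_abs: "rep (abs x) = x"
  by (simp add: abs_inverse)

lemma rep_sum: "rep (sum f I) = (\<Sum>i\<in>I. rep (f i))"
  by (induction I rule: infinite_finite_induct) (simp_all add: plus_M.rep_eq zero_M.rep_eq)

lemma abs_cscale: "abs (cscale (- \<i>) A) = ci * abs A"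
  by (rule rep_inject[THEN iffD1]) (simp add: ci_def times_M.rep_eq rep_abs cscale_left[of _ A])

lemma ci_comm: "ci * x = x * ci"
  by (rule rep_inject[THEN iffD1])
     (simp add: ci_def times_M.rep_eq rep_abs cscale_left[symmetric] cscale_right[symmetric])

lemma ci_sq: "ci * ci = (-1::'n::finite M)"
proof (rule rep_inject[THEN iffD1])
  have "cscale (- \<i>) (mat 1) ** cscale (- \<i>) (mat 1) = cscale (- \<i>) (cscale (- \<i>) (mat 1 :: 'n cmat))"
    by (simp add: cscale_left[of _ "cscale (- \<i>) (mat 1)"])
  also have "\<dots> = - mat 1" by (simp add: cscale_def vec_eq_iff)
  finally show "rep (ci * ci) = rep (-1::'n M)"
    by (simp add: ci_def times_M.rep_eq rep_abs uminus_M.rep_eq one_M.rep_eq)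
qed

lemma star_ci: "star ci = - (ci::'n::finite M)"
  by (rule rep_inject[THEN iffD1])
     (simp add: ci_def rep_star rep_abs adj_cscale adj_one uminus_M.rep_eq cscale_uminus adj_uminus)

lemma star_herm: "hermitian H \<Longrightarrow> star (abs H) = abs H"
  by (simp add: star_def rep_abs hermitian_def)

lemma star_zero: "star 0 = 0"
proof -
  have "star 0 = star 0 + star (0::'n::finite M)" by (metis add_0 star_add)
  then show ?thesis by simp
qed

lemma star_sum: "star (sum f I) = (\<Sum>i\<in>I. star (f i))"
  by (induction I rule: infinite_finite_induct)
     (simp_all add: star_add star_zero)

lemma ci_mid: "x * (ci * y) = ci * (x * y)"
  by (metis ci_comm mult.assoc)

lemma ci_ci: "ci * (ci * Z) = - Z"
  by (simp add: mult.assoc[symmetric] ci_sq)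

lemma ci_comm_norm:
  "norm ((r *\<^sub>R (ci * X)) * (r *\<^sub>R (ci * Y)) - (r *\<^sub>R (ci * Y)) * (r *\<^sub>R (ci * X))) = r\<^sup>2 * norm (X * Y - Y * X)"
proof -
  have e: "(ci * X) * (ci * Y) = - (X * Y)" for X Y :: "'a M"
    by (metis ci_mid ci_sq minus_mult_commute mult.assoc mult_1)
  have "(r *\<^sub>R (ci * X)) * (r *\<^sub>R (ci * Y)) - (r *\<^sub>R (ci * Y)) * (r *\<^sub>R (ci * X)) = (r * r) *\<^sub>R (Y * X - X * Y)"
    by (simp only: mult_scaleR_left mult_scaleR_right scaleR_scaleR e) (simp add: algebra_simps)
  then show ?thesis by (simp add: power2_eq_square norm_minus_commute)
qed

lemma oprod_rep: "oprod (map (\<lambda>\<gamma>. rep (g \<gamma>)) xs) = rep (foldr (*) (map g xs) 1)"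
  by (induction xs) (simp_all add: oprod_def one_M.rep_eq times_M.rep_eq)


lemma cscale_i: "cscale \<i> A = - cscale (- \<i>) (A::'n::finite cmat)"
  by (simp add: cscale_def vec_eq_iff)

lemma norm_comm_le: "norm (X * Y - Y * X) \<le> 2 * norm X * norm (Y::'a::real_normed_algebra)"
proof -
  have "norm (X * Y - Y * X) \<le> norm (X * Y) + norm (Y * X)" by (rule norm_triangle_ineq4)
  also have "\<dots> \<le> norm X * norm Y + norm Y * norm X" by (intro add_mono norm_mult_ineq)
  finally show ?thesis by simp
qed

theorem theorem1:
  fixes H0 :: "'n::finite cmat" and H1 :: "nat \<Rightarrow> 'n cmat" and \<Gamma> :: nat
  assumes "hermitian H0"
    and "\<And>\<gamma>. \<gamma> \<in> {1..\<Gamma>} \<Longrightarrow> hermitian (H1 \<gamma>)"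
  shows "(\<forall>(\<alpha>::real) (t::real). 0 \<le> t \<longrightarrow>
           opnorm (U_exact H0 H1 \<Gamma> \<alpha> t - U_apx H0 H1 \<Gamma> \<alpha> t)
           \<le> \<alpha>\<^sup>2 * integral {0..t} (\<lambda>v. integral {0..v} (\<lambda>s.
                 \<Sum>(\<gamma>1, \<gamma>2) \<in> {(a, b). 1 \<le> a \<and> a < b \<and> b \<le> \<Gamma>}.
                   opnorm (commutator (interaction H0 (H1 \<gamma>1) s) (interaction H0 (H1 \<gamma>2) v)))))
       \<and> (\<exists>C::real. \<forall>(\<alpha>::real) (t::real). 0 \<le> t \<longrightarrow>
           opnorm (U_exact H0 H1 \<Gamma> \<alpha> t - U_apx H0 H1 \<Gamma> \<alpha> t) \<le> C * \<alpha>\<^sup>2 * t\<^sup>2)"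
proof -
  define k0 :: "'n M" where "k0 = abs (cscale (- \<i>) H0)"
  define kk :: "nat \<Rightarrow> 'n M" where "kk = (\<lambda>\<gamma>. abs (cscale (- \<i>) (H1 \<gamma>)))"
  define It where "It = (\<lambda>a s. exp (- (s *\<^sub>R k0)) * abs (H1 a) * exp (s *\<^sub>R k0))"
  define Pairs where "Pairs = {(a, b). 1 \<le> a \<and> a < b \<and> b \<le> \<Gamma>}"
  have rk0: "rep k0 = cscale (- \<i>) H0" by (simp add: k0_def rep_abs)
  have rkk: "rep (kk \<gamma>) = cscale (- \<i>) (H1 \<gamma>)" for \<gamma> by (simp add: kk_def rep_abs)
  have skew0: "star k0 = - k0"
    unfolding k0_def abs_cscale star_mult star_herm[OF assms(1)] star_ci by (simp add: ci_comm)
  have skewk: "star (kk \<gamma>) = - kk \<gamma>" if "\<gamma> \<in> {1..\<Gamma>}" for \<gamma>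
    unfolding kk_def abs_cscale star_mult star_herm[OF assms(2)[OF that]] star_ci by (simp add: ci_comm)
  have nI: "norm (exp (t *\<^sub>R (k0 + sum (\<lambda>\<gamma>. \<alpha> *\<^sub>R kk \<gamma>) I))) \<le> 1" if "I \<subseteq> {1..\<Gamma>}" for \<alpha> t I
  proof (rule skew_exp_norm)
    have "(\<Sum>\<gamma>\<in>I. \<alpha> *\<^sub>R star (kk \<gamma>)) = (\<Sum>\<gamma>\<in>I. - (\<alpha> *\<^sub>R kk \<gamma>))"
      by (rule sum.cong) (use that skewk in auto)
    then show "star (t *\<^sub>R (k0 + sum (\<lambda>\<gamma>. \<alpha> *\<^sub>R kk \<gamma>) I)) = - (t *\<^sub>R (k0 + sum (\<lambda>\<gamma>. \<alpha> *\<^sub>R kk \<gamma>) I))"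
      by (simp add: star_scaleR star_add star_sum skew0 sum_negf algebra_simps)
  qed
  have nE: "norm (exp (t *\<^sub>R k0)) \<le> 1" for t using nI[of "{}" t] by simp
  have nE': "norm (exp (- (t *\<^sub>R k0))) \<le> 1" for t using nE[of "-t"] by simp
  have UE: "U_exact H0 H1 \<Gamma> \<alpha> t = rep (exp (t *\<^sub>R (k0 + sum (\<lambda>\<gamma>. \<alpha> *\<^sub>R kk \<gamma>) {1..\<Gamma>})))" for \<alpha> t
  proof -
    have "cscale (- \<i> * complex_of_real t) (H0 + cscale (complex_of_real \<alpha>) (\<Sum>\<gamma>\<in>{1..\<Gamma>}. H1 \<gamma>))
        = rep (t *\<^sub>R (k0 + sum (\<lambda>\<gamma>. \<alpha> *\<^sub>R kk \<gamma>) {1..\<Gamma>}))"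
      by (simp add: scaleR_M.rep_eq plus_M.rep_eq rep_sum rk0 rkk cscale_mult_real cscale_mult_real2 cscale_add
            cscale_of_real cscale_scaleR cscale_sum scaleR_sum_right)
         (simp add: scaleR_add_right scaleR_sum_right mult.commute)
    then show ?thesis by (simp add: U_exact_def rep_exp)
  qed
  have e1: "cscale (- \<i> * complex_of_real t) H0 = rep (t *\<^sub>R k0)" for t
    by (simp add: scaleR_M.rep_eq rk0 cscale_mult_real cscale_mult_real2)
  have e2: "cscale (\<i> * complex_of_real t) H0 = rep (- (t *\<^sub>R k0))" for t
    by (simp add: scaleR_M.rep_eq uminus_M.rep_eq rk0 cscale_mult_real cscale_i)
  have e3: "cscale (- \<i> * complex_of_real t) (H0 + cscale (complex_of_real \<alpha>) (H1 \<gamma>))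
        = rep (t *\<^sub>R (k0 + \<alpha> *\<^sub>R kk \<gamma>))" for t \<alpha> \<gamma>
    by (simp add: scaleR_M.rep_eq plus_M.rep_eq rk0 rkk cscale_mult_real cscale_mult_real2 cscale_add
            cscale_of_real cscale_scaleR)
       (simp add: scaleR_add_right mult.commute)
  have UA: "U_apx H0 H1 \<Gamma> \<alpha> t = rep (exp (t *\<^sub>R k0) * foldr (*) (map (\<lambda>\<gamma>. exp (- (t *\<^sub>R k0))
              * exp (t *\<^sub>R (k0 + \<alpha> *\<^sub>R kk \<gamma>))) [1..<\<Gamma>+1]) 1)" for \<alpha> t
    unfolding U_apx_def e1 e2 e3
    by (simp only: rep_exp[symmetric] times_M.rep_eq[symmetric] oprod_rep)
  have IE: "interaction H0 H s = rep (exp (- (s *\<^sub>R k0)) * abs H * exp (s *\<^sub>R k0))" for H s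
    unfolding interaction_def e1 e2
    by (simp add: rep_exp times_M.rep_eq rep_abs)
  have CE: "opnorm (commutator (rep a) (rep b)) = norm (a * b - b * a)" for a b :: "'n M"
    by (simp add: commutator_def norm_M.rep_eq times_M.rep_eq minus_M.rep_eq)
  have OC: "opnorm (commutator (interaction H0 (H1 a) s) (interaction H0 (H1 b) v))
      = norm (It a s * It b v - It b v * It a s)" for a b s v
    unfolding IE CE It_def ..
  have Bt: "exp (- (s *\<^sub>R k0)) * (\<alpha> *\<^sub>R kk a) * exp (s *\<^sub>R k0) = \<alpha> *\<^sub>R (ci * It a s)" for \<alpha> a s
    unfolding kk_def abs_cscale It_def
    by (simp add: ci_mid mult.assoc)
  have FE: "norm ((exp (- (s *\<^sub>R k0)) * (\<alpha> *\<^sub>R kk a) * exp (s *\<^sub>R k0)) * (exp (- (v *\<^sub>R k0)) * (\<alpha> *\<^sub>R kk b) * exp (v *\<^sub>R k0))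
             - (exp (- (v *\<^sub>R k0)) * (\<alpha> *\<^sub>R kk b) * exp (v *\<^sub>R k0)) * (exp (- (s *\<^sub>R k0)) * (\<alpha> *\<^sub>R kk a) * exp (s *\<^sub>R k0)))
        = \<alpha>\<^sup>2 * opnorm (commutator (interaction H0 (H1 a) s) (interaction H0 (H1 b) v))" for \<alpha> a b s v
    unfolding Bt OC by (rule ci_comm_norm)
  have part1: "opnorm (U_exact H0 H1 \<Gamma> \<alpha> t - U_apx H0 H1 \<Gamma> \<alpha> t)
           \<le> \<alpha>\<^sup>2 * integral {0..t} (\<lambda>v. integral {0..v} (\<lambda>s.
                 \<Sum>(\<gamma>1, \<gamma>2) \<in> Pairs.
                   opnorm (commutator (interaction H0 (H1 \<gamma>1) s) (interaction H0 (H1 \<gamma>2) v))))"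
    if t: "0 \<le> t" for \<alpha> t
  proof -
    have "opnorm (U_exact H0 H1 \<Gamma> \<alpha> t - U_apx H0 H1 \<Gamma> \<alpha> t)
        = norm (exp (t *\<^sub>R (k0 + sum (\<lambda>\<gamma>. \<alpha> *\<^sub>R kk \<gamma>) {1..\<Gamma>})) - exp (t *\<^sub>R k0) * foldr (*) (map (\<lambda>\<gamma>. exp (- (t *\<^sub>R k0))
              * exp (t *\<^sub>R (k0 + \<alpha> *\<^sub>R kk \<gamma>))) [1..<\<Gamma>+1]) 1)"
      unfolding UE UA by (simp only: minus_M.rep_eq[symmetric] norm_M.rep_eq[symmetric])
    also have "\<dots> \<le> integral {0..t} (\<lambda>v. integral {0..v} (\<lambda>s.
              \<Sum>(a, b) \<in> Pairs. \<alpha>\<^sup>2 * opnorm (commutator (interaction H0 (H1 a) s) (interaction H0 (H1 b) v))))"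
      using abstract_main[of \<Gamma> k0 "\<lambda>\<gamma>. \<alpha> *\<^sub>R kk \<gamma>" t, OF nI t] unfolding FE Pairs_def by simp
    also have "\<dots> = \<alpha>\<^sup>2 * integral {0..t} (\<lambda>v. integral {0..v} (\<lambda>s.
                 \<Sum>(\<gamma>1, \<gamma>2) \<in> Pairs.
                   opnorm (commutator (interaction H0 (H1 \<gamma>1) s) (interaction H0 (H1 \<gamma>2) v))))"
      by (simp add: sum_distrib_left[symmetric] case_prod_beta)
    finally show ?thesis .
  qed
  define C where "C = (\<Sum>(a, b) \<in> Pairs. 2 * norm (abs (H1 a) :: 'n M) * norm (abs (H1 b) :: 'n M))"
  have part2: "integral {0..t} (\<lambda>v. integral {0..v} (\<lambda>s.
                 \<Sum>(\<gamma>1, \<gamma>2) \<in> Pairs.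
                   opnorm (commutator (interaction H0 (H1 \<gamma>1) s) (interaction H0 (H1 \<gamma>2) v)))) \<le> C * t\<^sup>2"
    if t: "0 \<le> t" for t
  proof -
    define \<Phi> where "\<Phi> = (\<lambda>s v. \<Sum>(a, b) \<in> Pairs. norm (It a s * It b v - It b v * It a s))"
    have PhiE: "(\<Sum>(\<gamma>1, \<gamma>2) \<in> Pairs.
                   opnorm (commutator (interaction H0 (H1 \<gamma>1) s) (interaction H0 (H1 \<gamma>2) v))) = \<Phi> s v" for s v
      unfolding \<Phi>_def OC ..
    have Phic: "continuous_on UNIV (\<lambda>p. \<Phi> (fst p) (snd p))"
      unfolding \<Phi>_def It_def case_prod_beta by (intro continuous_intros)
    have Phic1: "continuous_on S (\<lambda>s. \<Phi> s v)" for S v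
      unfolding \<Phi>_def It_def case_prod_beta by (intro continuous_intros)
    have nIt: "norm (It a s) \<le> norm (abs (H1 a) :: 'n M)" for a s
      unfolding It_def by (rule norm3[OF nE' nE])
    have PhiC: "\<Phi> s v \<le> C" for s v
      unfolding \<Phi>_def C_def case_prod_beta
    proof (rule sum_mono)
      fix p
      have "norm (It (fst p) s * It (snd p) v - It (snd p) v * It (fst p) s)
            \<le> 2 * norm (It (fst p) s) * norm (It (snd p) v)" by (rule norm_comm_le)
      also have "\<dots> \<le> 2 * norm (abs (H1 (fst p)) :: 'n M) * norm (abs (H1 (snd p)) :: 'n M)"
        using nIt by (intro mult_mono) auto
      finally show "norm (It (fst p) s * It (snd p) v - It (snd p) v * It (fst p) s)
            \<le> 2 * norm (abs (H1 (fst p)) :: 'n M) * norm (abs (H1 (snd p)) :: 'n M)" .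
    qed
    have C0: "0 \<le> C" unfolding C_def case_prod_beta by (intro sum_nonneg) simp
    have inner: "integral {0..v} (\<lambda>s. \<Phi> s v) \<le> t * C" if v: "v \<in> {0..t}" for v
    proof -
      have "integral {0..v} (\<lambda>s. \<Phi> s v) \<le> integral {0..v} (\<lambda>s. C)"
        by (rule integral_le) (auto intro: integrable_continuous_real Phic1 PhiC)
      also have "\<dots> = v * C" using v by simp
      also have "\<dots> \<le> t * C" using v C0 by (intro mult_right_mono) auto
      finally show ?thesis .
    qed
    have "integral {0..t} (\<lambda>v. integral {0..v} (\<lambda>s. \<Phi> s v)) \<le> integral {0..t} (\<lambda>v. t * C)"
      by (rule integral_le) (auto intro: integrable_continuous_real cont_param_int[OF Phic] inner)
    also have "\<dots> = C * t\<^sup>2" using t by (simp add: power2_eq_square)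
    finally show ?thesis unfolding PhiE .
  qed
  show ?thesis
  proof
    show "\<forall>\<alpha> t. 0 \<le> t \<longrightarrow> opnorm (U_exact H0 H1 \<Gamma> \<alpha> t - U_apx H0 H1 \<Gamma> \<alpha> t)
           \<le> \<alpha>\<^sup>2 * integral {0..t} (\<lambda>v. integral {0..v} (\<lambda>s.
                 \<Sum>(\<gamma>1, \<gamma>2) \<in> {(a, b). 1 \<le> a \<and> a < b \<and> b \<le> \<Gamma>}.
                   opnorm (commutator (interaction H0 (H1 \<gamma>1) s) (interaction H0 (H1 \<gamma>2) v))))"
      using part1 unfolding Pairs_def by blast
    show "\<exists>C. \<forall>\<alpha> t. 0 \<le> t \<longrightarrow> opnorm (U_exact H0 H1 \<Gamma> \<alpha> t - U_apx H0 H1 \<Gamma> \<alpha> t) \<le> C * \<alpha>\<^sup>2 * t\<^sup>2"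
    proof (intro exI allI impI)
      fix \<alpha> t :: real assume t: "0 \<le> t"
      have "opnorm (U_exact H0 H1 \<Gamma> \<alpha> t - U_apx H0 H1 \<Gamma> \<alpha> t) \<le> \<alpha>\<^sup>2 * (C * t\<^sup>2)"
        using part1[OF t, of \<alpha>] part2[OF t] mult_left_mono[OF part2[OF t], of "\<alpha>\<^sup>2"]
        by simp
      then show "opnorm (U_exact H0 H1 \<Gamma> \<alpha> t - U_apx H0 H1 \<Gamma> \<alpha> t) \<le> C * \<alpha>\<^sup>2 * t\<^sup>2"
        by (simp add: mult_ac)
    qed
  qed
qed

end
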